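(* Let $\mathcal G'_3$, $\tau$, $\mathcal G'_6$ and $\mathcal B$ be as in the context. There is a first-order sentence $\psi$ in the signature $\Gamma_6\cup\{<\}$ which is $(\mathcal G'_6,\mathcal B)$-invariant and such that for every $(G,x,y,z)\in\mathcal G'_3$: if $x,y,z$ lie in one connected component and $d(x,y)=d(x,z)$, then $G^\tau\models(\mathfrak B<)\psi$; if $x,y,z$ do not all lie in one connected component, or $|d(x,y)-d(x,z)|\ge 2$, then $G^\tau\models\neg(\mathfrak B<)\psi$.
   Context: Graphs are finite and undirected; $d$ denotes graph distance. A linear order $<$ of the vertex set of a graph, listing vertices $v_1<\dots<v_n$, is a breadth-first traversal (BFT) if for each $i\ge2$, whenever some $v_j$ with $j<i$ has a neighbour outside $\{v_1,\dots,v_{i-1}\}$, $v_i$ is adjacent to $v_{j^*}$ for the least such $j^*$ (i.e. $<$ is a visiting order of breadth-first search). Equivalently: for all $u<v<w$, $uEw$ implies some $x<v$ with $x\le u$ has $xEv$. $\Gamma_n$ is the signature with a binary relation symbol $E$ and $n$ constant symbols; an $n$-pointed graph is a graph with $n$ distinguished vertices. $\mathcal G'_3$ is the family of finite 3-pointed graphs $(G,x,y,z)$ such that, if $x,y,z$ lie in the same connected component, then $|d(x,y)-d(x,z)|\neq 1$. For a 3-pointed graph $(G,x,y,z)$, $G^\tau$ is the 6-pointed graph obtained from two disjoint copies $G_1,G_2$ of $G$ (each with edges inherited from $G$) by adding a single edge between $x_1$ and $x_2$, where $x_i,y_i,z_i$ denote the copies of $x,y,z$ in $G_i$; its constants are $x_1,y_1,z_1,x_2,y_2,z_2$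 (this is given by a 2-dimensional quantifier-free interpretation $\tau:\Gamma_6\to\Gamma_3$). $\mathcal G'_6=\{G^\tau: G\in\mathcal G'_3\}$, and $\mathcal B$ is the family of all expansions $(H,<)$ with $H\in\mathcal G'_6$ and $<$ a BFT of $H$. A $\Gamma_6\cup\{<\}$-sentence $\psi$ is $(\mathcal G'_6,\mathcal B)$-invariant if $(H,<)\models\psi\iff(H',<')\models\psi$ for all $(H,<),(H',<')\in\mathcal B$ with $H\cong H'$. For such $\psi$ and $H\in\mathcal G'_6$, $H\models(\mathfrak B<)\psi$ means $(H,<)\models\psi$ for some (equivalently every) BFT $<$ of $H$. *)

theory Defs
  imports Main
begin

text \<open>Terms: variables (indexed by nat) and constant symbols c_0,...,c_5
  (only indices below 6 are allowed in sentences).\<close>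
datatype fo_term = Var nat | Cst nat

datatype fo =
    Eq fo_term fo_term
  | Edge fo_term fo_term
  | Less fo_term fo_term
  | Neg fo
  | Conj fo fo
  | Disj fo fo
  | Ex nat fo
  | All nat fo

fun fv_term :: "fo_term \<Rightarrow> nat set" where
  "fv_term (Var n) = {n}"
| "fv_term (Cst k) = {}"

fun cs_term :: "fo_term \<Rightarrow> nat set" where
  "cs_term (Var n) = {}"
| "cs_term (Cst k) = {k}"

fun fv :: "fo \<Rightarrow> nat set" where
  "fv (Eq s t) = fv_term s \<union> fv_term t"
| "fv (Edge s t) = fv_term s \<union> fv_term t"
| "fv (Less s t) = fv_term s \<union> fv_term t"
| "fv (Neg p) = fv p"
| "fv (Conj p q) = fv p \<union> fv q"
| "fv (Disj p q) = fv p \<union> fv q"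
| "fv (Ex x p) = fv p - {x}"
| "fv (All x p) = fv p - {x}"

fun consts_of :: "fo \<Rightarrow> nat set" where
  "consts_of (Eq s t) = cs_term s \<union> cs_term t"
| "consts_of (Edge s t) = cs_term s \<union> cs_term t"
| "consts_of (Less s t) = cs_term s \<union> cs_term t"
| "consts_of (Neg p) = consts_of p"
| "consts_of (Conj p q) = consts_of p \<union> consts_of q"
| "consts_of (Disj p q) = consts_of p \<union> consts_of q"
| "consts_of (Ex x p) = consts_of p"
| "consts_of (All x p) = consts_of p"

definition sentence6 :: "fo \<Rightarrow> bool" where
  "sentence6 p \<longleftrightarrow> fv p = {} \<and> consts_of p \<subseteq> {..<6}"

fun eval_term :: "(nat \<Rightarrow> 'v) \<Rightarrow> (nat \<Rightarrow> 'v) \<Rightarrow> fo_term \<Rightarrow> 'v" where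
  "eval_term c \<rho> (Var n) = \<rho> n"
| "eval_term c \<rho> (Cst k) = c k"

fun sat :: "'v set \<Rightarrow> ('v \<Rightarrow> 'v \<Rightarrow> bool) \<Rightarrow> ('v \<Rightarrow> 'v \<Rightarrow> bool) \<Rightarrow> (nat \<Rightarrow> 'v)
            \<Rightarrow> (nat \<Rightarrow> 'v) \<Rightarrow> fo \<Rightarrow> bool" where
  "sat V E L c \<rho> (Eq s t) = (eval_term c \<rho> s = eval_term c \<rho> t)"
| "sat V E L c \<rho> (Edge s t) = E (eval_term c \<rho> s) (eval_term c \<rho> t)"
| "sat V E L c \<rho> (Less s t) = L (eval_term c \<rho> s) (eval_term c \<rho> t)"
| "sat V E L c \<rho> (Neg p) = (\<not> sat V E L c \<rho> p)"
| "sat V E L c \<rho> (Conj p q) = (sat V E L c \<rho> p \<and> sat V E L c \<rho> q)"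
| "sat V E L c \<rho> (Disj p q) = (sat V E L c \<rho> p \<or> sat V E L c \<rho> q)"
| "sat V E L c \<rho> (Ex x p) = (\<exists>v\<in>V. sat V E L c (\<rho>(x := v)) p)"
| "sat V E L c \<rho> (All x p) = (\<forall>v\<in>V. sat V E L c (\<rho>(x := v)) p)"

text \<open>Truth of a sentence (assignment irrelevant; we fix one arbitrary assignment into V).\<close>
definition models :: "'v set \<Rightarrow> ('v \<Rightarrow> 'v \<Rightarrow> bool) \<Rightarrow> ('v \<Rightarrow> 'v \<Rightarrow> bool) \<Rightarrow> (nat \<Rightarrow> 'v)
                     \<Rightarrow> fo \<Rightarrow> bool" where
  "models V E L c p \<longleftrightarrow> sat V E L c (\<lambda>_. SOME v. v \<in> V) p"

definition graph :: "'v set \<Rightarrow> ('v \<Rightarrow> 'v \<Rightarrow> bool) \<Rightarrow> bool" where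
  "graph V E \<longleftrightarrow> finite V \<and> (\<forall>u v. E u v \<longrightarrow> u \<in> V \<and> v \<in> V)
                 \<and> (\<forall>u v. E u v \<longrightarrow> E v u) \<and> (\<forall>u. \<not> E u u)"

definition walk_rel :: "('v \<Rightarrow> 'v \<Rightarrow> bool) \<Rightarrow> ('v \<times> 'v) set" where
  "walk_rel E = {(u, v). E u v}"

definition connected :: "('v \<Rightarrow> 'v \<Rightarrow> bool) \<Rightarrow> 'v \<Rightarrow> 'v \<Rightarrow> bool" where
  "connected E u v \<longleftrightarrow> (u, v) \<in> (walk_rel E)\<^sup>*"

text \<open>Graph distance: length of a shortest walk (only meaningful when connected).\<close>
definition dist :: "('v \<Rightarrow> 'v \<Rightarrow> bool) \<Rightarrow> 'v \<Rightarrow> 'v \<Rightarrow> nat" where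
  "dist E u v = (LEAST n. (u, v) \<in> (walk_rel E) ^^ n)"

definition same_comp3 :: "('v \<Rightarrow> 'v \<Rightarrow> bool) \<Rightarrow> 'v \<Rightarrow> 'v \<Rightarrow> 'v \<Rightarrow> bool" where
  "same_comp3 E x y z \<longleftrightarrow> connected E x y \<and> connected E x z"

text \<open>The family G'_3 (vertices taken from nat; every finite graph is isomorphic to one).\<close>
definition G3' :: "nat set \<Rightarrow> (nat \<Rightarrow> nat \<Rightarrow> bool) \<Rightarrow> nat \<Rightarrow> nat \<Rightarrow> nat \<Rightarrow> bool" where
  "G3' V E x y z \<longleftrightarrow> graph V E \<and> x \<in> V \<and> y \<in> V \<and> z \<in> V
     \<and> (same_comp3 E x y z \<longrightarrow> \<bar>int (dist E x y) - int (dist E x z)\<bar> \<noteq> 1)"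

text \<open>Copy i of vertex v is (v, b) with b = False for copy 1 and b = True for copy 2.\<close>
definition tauV :: "'v set \<Rightarrow> ('v \<times> bool) set" where
  "tauV V = V \<times> UNIV"

definition tauE :: "('v \<Rightarrow> 'v \<Rightarrow> bool) \<Rightarrow> 'v \<Rightarrow> ('v \<times> bool) \<Rightarrow> ('v \<times> bool) \<Rightarrow> bool" where
  "tauE E x p q \<longleftrightarrow> (snd p = snd q \<and> E (fst p) (fst q))
                   \<or> (fst p = x \<and> fst q = x \<and> snd p \<noteq> snd q)"

text \<open>Constants of G^tau: c_0,c_1,c_2 = x_1,y_1,z_1 and c_3,c_4,c_5 = x_2,y_2,z_2.\<close>
definition tauC :: "'v \<Rightarrow> 'v \<Rightarrow> 'v \<Rightarrow> nat \<Rightarrow> ('v \<times> bool)" where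
  "tauC x y z k = (if k = 0 then (x, False) else if k = 1 then (y, False)
                  else if k = 2 then (z, False) else if k = 3 then (x, True)
                  else if k = 4 then (y, True) else (z, True))"

definition strict_linorder_on :: "'v set \<Rightarrow> ('v \<Rightarrow> 'v \<Rightarrow> bool) \<Rightarrow> bool" where
  "strict_linorder_on V L \<longleftrightarrow> (\<forall>u v. L u v \<longrightarrow> u \<in> V \<and> v \<in> V)
     \<and> (\<forall>u. \<not> L u u) \<and> (\<forall>u v w. L u v \<longrightarrow> L v w \<longrightarrow> L u w)
     \<and> (\<forall>u\<in>V. \<forall>v\<in>V. u = v \<or> L u v \<or> L v u)"

definition bft :: "'v set \<Rightarrow> ('v \<Rightarrow> 'v \<Rightarrow> bool) \<Rightarrow> ('v \<Rightarrow> 'v \<Rightarrow> bool) \<Rightarrow> bool" where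
  "bft V E L \<longleftrightarrow> strict_linorder_on V L \<and>
     (\<forall>v\<in>V. \<forall>u\<in>V.
        (L u v \<and> (\<exists>w\<in>V. E u w \<and> \<not> L w v)
          \<and> (\<forall>u'\<in>V. L u' u \<longrightarrow> \<not> (\<exists>w\<in>V. E u' w \<and> \<not> L w v)))
        \<longrightarrow> E u v)"

definition iso6 :: "'v set \<Rightarrow> ('v \<Rightarrow> 'v \<Rightarrow> bool) \<Rightarrow> (nat \<Rightarrow> 'v)
                    \<Rightarrow> 'w set \<Rightarrow> ('w \<Rightarrow> 'w \<Rightarrow> bool) \<Rightarrow> (nat \<Rightarrow> 'w) \<Rightarrow> bool" where
  "iso6 V E c V' E' c' \<longleftrightarrow> (\<exists>f. bij_betw f V V'
      \<and> (\<forall>u\<in>V. \<forall>v\<in>V. E u v \<longleftrightarrow> E' (f u) (f v))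
      \<and> (\<forall>k<6. f (c k) = c' k))"

definition B_invariant :: "fo \<Rightarrow> bool" where
  "B_invariant p \<longleftrightarrow>
    (\<forall>V E x y z V' E' x' y' z' L L'.
       G3' V E x y z \<longrightarrow> G3' V' E' x' y' z' \<longrightarrow>
       bft (tauV V) (tauE E x) L \<longrightarrow> bft (tauV V') (tauE E' x') L' \<longrightarrow>
       iso6 (tauV V) (tauE E x) (tauC x y z) (tauV V') (tauE E' x') (tauC x' y' z') \<longrightarrow>
       (models (tauV V) (tauE E x) L (tauC x y z) p
         \<longleftrightarrow> models (tauV V') (tauE E' x') L' (tauC x' y' z') p))"

text \<open>G^tau |= (B<) psi: some BFT of G^tau makes psi true.\<close>
definition tau_models_B :: "nat set \<Rightarrow> (nat \<Rightarrow> nat \<Rightarrow> bool) \<Rightarrow> nat \<Rightarrow> nat \<Rightarrow> nat \<Rightarrow> fo \<Rightarrow> bool" where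
  "tau_models_B V E x y z p \<longleftrightarrow>
     (\<exists>L. bft (tauV V) (tauE E x) L \<and> models (tauV V) (tauE E x) L (tauC x y z) p)"

end

theory Submission
  imports Defs
begin


lemma walk_rel_iff[simp]: "(u,v) \<in> walk_rel E \<longleftrightarrow> E u v"
  by (simp add: walk_rel_def)

lemma dist_attained: "connected E u v \<Longrightarrow> (u,v) \<in> walk_rel E ^^ dist E u v"
  unfolding connected_def dist_def by (metis LeastI_ex rtrancl_power)

lemma dist_le: "(u,v) \<in> walk_rel E ^^ n \<Longrightarrow> dist E u v \<le> n"
  by (simp add: dist_def Least_le)

lemma conn_of_pow: "(u,v) \<in> walk_rel E ^^ n \<Longrightarrow> connected E u v"
  unfolding connected_def using relpow_imp_rtrancl by blast

lemma conn_refl[simp]: "connected E u u"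
  unfolding connected_def by simp

lemma conn_trans: "connected E u v \<Longrightarrow> connected E v w \<Longrightarrow> connected E u w"
  unfolding connected_def by simp

lemma conn_edge: "connected E u p \<Longrightarrow> E p q \<Longrightarrow> connected E u q"
  unfolding connected_def by (simp add: rtrancl.rtrancl_into_rtrancl)

lemma dist_edge: "connected E u p \<Longrightarrow> E p q \<Longrightarrow> dist E u q \<le> dist E u p + 1"
proof -
  assume a: "connected E u p" "E p q"
  have "(u,q) \<in> walk_rel E ^^ Suc (dist E u p)"
    using dist_attained[OF a(1)] a(2) by (auto intro: relpow_Suc_I)
  then show ?thesis using dist_le by fastforce
qed

lemma dist_self[simp]: "dist E u u = 0"
  by (metis dist_le le_zero_eq relpow_0_I)

lemma dist_zero: "connected E u v \<Longrightarrow> dist E u v = 0 \<Longrightarrow> u = v"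
  using dist_attained[of E u v] by simp

lemma dist_pred:
  assumes "connected E u v" "dist E u v = Suc n"
  shows "\<exists>w. E w v \<and> connected E u w \<and> dist E u w = n"
proof -
  have "(u,v) \<in> walk_rel E ^^ Suc n" using dist_attained[OF assms(1)] assms(2) by simp
  then obtain w where w: "(u,w) \<in> walk_rel E ^^ n" "E w v" by auto
  have c: "connected E u w" using conn_of_pow[OF w(1)] .
  have "dist E u w \<le> n" using dist_le[OF w(1)] .
  moreover have "dist E u v \<le> dist E u w + 1" using dist_edge[OF c w(2)] .
  ultimately show ?thesis using w c assms(2) by (intro exI[of _ w]) auto
qed

lemma dist_trans:
  assumes "connected E u w" "connected E w v"
  shows "dist E u v \<le> dist E u w + dist E w v"
proof -
  have "(u,v) \<in> walk_rel E ^^ (dist E u w + dist E w v)"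
    using dist_attained[OF assms(1)] dist_attained[OF assms(2)] by (auto simp: relpow_add)
  then show ?thesis by (rule dist_le)
qed

lemma pow_sym:
  assumes s: "\<forall>a b. E a b \<longrightarrow> E b a"
  shows "(u,v) \<in> walk_rel E ^^ n \<Longrightarrow> (v,u) \<in> walk_rel E ^^ n"
proof (induction n arbitrary: u v)
  case 0 then show ?case by simp
next
  case (Suc n)
  then obtain w where w: "(u,w) \<in> walk_rel E ^^ n" "E w v" by auto
  have "(w,u) \<in> walk_rel E ^^ n" using Suc.IH[OF w(1)] .
  moreover have "(v,w) \<in> walk_rel E" using s w(2) by simp
  ultimately show ?case by (meson relpow_Suc_I2)
qed

lemma conn_sym: "\<forall>a b. E a b \<longrightarrow> E b a \<Longrightarrow> connected E u v \<Longrightarrow> connected E v u"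
  using pow_sym dist_attained conn_of_pow by metis

lemma dist_sym: "\<forall>a b. E a b \<longrightarrow> E b a \<Longrightarrow> connected E u v \<Longrightarrow> dist E v u = dist E u v"
  by (metis antisym conn_sym dist_attained dist_le pow_sym)

lemma lip:
  assumes "P r" "f r \<le> (0::int)" "\<forall>p q. P p \<longrightarrow> E p q \<longrightarrow> P q \<and> f q \<le> f p + 1"
  shows "(r,v) \<in> walk_rel E ^^ n \<Longrightarrow> P v \<and> f v \<le> int n"
proof (induction n arbitrary: v)
  case 0 then show ?case using assms by simp
next
  case (Suc n)
  then obtain w where w: "(r,w) \<in> walk_rel E ^^ n" "E w v" by auto
  from Suc.IH[OF w(1)] have "P w" "f w \<le> int n" by auto
  then show ?case using assms(3) w(2) by fastforce
qed

lemma lip_dist: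
  assumes "P r" "f r \<le> (0::int)" "\<forall>p q. P p \<longrightarrow> E p q \<longrightarrow> P q \<and> f q \<le> f p + 1"
    "connected E r v"
  shows "f v \<le> int (dist E r v)"
  using lip[OF assms(1-3) dist_attained[OF assms(4)]] by simp



definition rootS :: "'v set \<Rightarrow> ('v \<Rightarrow> 'v \<Rightarrow> bool) \<Rightarrow> ('v \<Rightarrow> 'v \<Rightarrow> bool) \<Rightarrow> 'v \<Rightarrow> bool" where
  "rootS W F L v \<longleftrightarrow> \<not> (\<exists>w\<in>W. F w v \<and> L w v)"

definition connS :: "'v set \<Rightarrow> ('v \<Rightarrow> 'v \<Rightarrow> bool) \<Rightarrow> ('v \<Rightarrow> 'v \<Rightarrow> bool) \<Rightarrow> 'v \<Rightarrow> 'v \<Rightarrow> bool" where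
  "connS W F L a b \<longleftrightarrow> \<not> (\<exists>m\<in>W. rootS W F L m \<and>
      ((L a m \<and> (L m b \<or> m = b)) \<or> (L b m \<and> (L m a \<or> m = a))))"

definition sameS :: "'v set \<Rightarrow> ('v \<Rightarrow> 'v \<Rightarrow> bool) \<Rightarrow> ('v \<Rightarrow> 'v \<Rightarrow> bool) \<Rightarrow> 'v \<Rightarrow> 'v \<Rightarrow> bool" where
  "sameS W F L a b \<longleftrightarrow> a = b \<or> (L a b \<and> (\<exists>w\<in>W. F w b \<and> L w a))
      \<or> (L b a \<and> (\<exists>w\<in>W. F w a \<and> L w b))"

lemma min_ex:
  assumes "strict_linorder_on W L" "finite S" "S \<subseteq> W" "S \<noteq> {}"
  shows "\<exists>m\<in>S. \<forall>s\<in>S. \<not> L s m"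
proof -
  have "S \<subseteq> W \<longrightarrow> (\<exists>m\<in>S. \<forall>s\<in>S. \<not> L s m)"
    using assms(2,4)
  proof (induction S rule: finite_ne_induct)
    case (singleton x) then show ?case using assms(1) unfolding strict_linorder_on_def by auto
  next
    case (insert x T)
    show ?case
    proof
      assume sub: "insert x T \<subseteq> W"
      then obtain m where m: "m \<in> T" "\<forall>s\<in>T. \<not> L s m" using insert by auto
      show "\<exists>m\<in>insert x T. \<forall>s\<in>insert x T. \<not> L s m"
      proof (cases "L x m")
        case True
        have "\<forall>s\<in>T. \<not> L s x" using m True assms(1) unfolding strict_linorder_on_def by blast
        moreover have "\<not> L x x" using assms(1) unfolding strict_linorder_on_def by blast
        ultimately show ?thesis by blast
      next
        case False
        then show ?thesis using m by auto
      qed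
    qed
  qed
  then show ?thesis using assms(3) by blast
qed

locale bfs =
  fixes W :: "'v set" and F L
  assumes g: "graph W F" and b: "bft W F L"
begin

lemma lo: "strict_linorder_on W L" using b unfolding bft_def by simp
lemma LW: "L u v \<Longrightarrow> u \<in> W \<and> v \<in> W" using lo unfolding strict_linorder_on_def by blast
lemma irr[simp]: "\<not> L u u" using lo unfolding strict_linorder_on_def by blast
lemma tr: "L u v \<Longrightarrow> L v w \<Longrightarrow> L u w" using lo unfolding strict_linorder_on_def by blast
lemma asym: "L u v \<Longrightarrow> \<not> L v u" using tr irr by blast
lemma tot: "u \<in> W \<Longrightarrow> v \<in> W \<Longrightarrow> u = v \<or> L u v \<or> L v u"
  using lo unfolding strict_linorder_on_def by blast
lemma FW: "F u v \<Longrightarrow> u \<in> W \<and> v \<in> W" using g unfolding graph_def by blast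
lemma Fs: "F u v \<Longrightarrow> F v u" using g unfolding graph_def by blast
lemma Fs': "\<forall>a b. F a b \<longrightarrow> F b a" using Fs by blast
lemma Firr[simp]: "\<not> F u u" using g unfolding graph_def by blast
lemma fin: "finite W" using g unfolding graph_def by blast

lemma bcond: "v \<in> W \<Longrightarrow> u \<in> W \<Longrightarrow> L u v \<Longrightarrow> (\<exists>w\<in>W. F u w \<and> \<not> L w v) \<Longrightarrow>
   (\<forall>u'\<in>W. L u' u \<longrightarrow> \<not> (\<exists>w\<in>W. F u' w \<and> \<not> L w v)) \<Longrightarrow> F u v"
  using b unfolding bft_def by blast

lemma ustar:
  assumes "L u0 v" "F u0 w0" "\<not> L w0 v"
  shows "\<exists>u. F u v \<and> L u v \<and> (u = u0 \<or> L u u0)"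
proof -
  let ?S = "{u\<in>W. L u v \<and> (\<exists>w\<in>W. F u w \<and> \<not> L w v)}"
  have "u0 \<in> ?S" using assms LW FW by blast
  moreover have "finite ?S" using fin by simp
  ultimately obtain m where m: "m \<in> ?S" "\<forall>s\<in>?S. \<not> L s m"
    using min_ex[OF lo, of ?S] by blast
  have vW: "v \<in> W" using LW assms(1) by blast
  have "F m v"
  proof (rule bcond[OF vW])
    show "m \<in> W" "L m v" "\<exists>w\<in>W. F m w \<and> \<not> L w v" using m by auto
    show "\<forall>u'\<in>W. L u' m \<longrightarrow> \<not> (\<exists>w\<in>W. F u' w \<and> \<not> L w v)"
      using m tr by blast
  qed
  moreover have "m = u0 \<or> L m u0" using m \<open>u0 \<in> ?S\<close> tot by blast
  ultimately show ?thesis using m by blast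
qed

lemma root_closed:
  assumes "rootS W F L v" "L u v" "F u w"
  shows "L w v"
proof (rule ccontr)
  assume "\<not> L w v"
  from ustar[OF assms(2,3) this] assms(1) show False
    unfolding rootS_def using FW by blast
qed

lemma root_closed_conn:
  assumes "rootS W F L v" "L u v" "connected F u w"
  shows "L w v"
  using assms(3) unfolding connected_def
proof (induction rule: rtrancl_induct)
  case base then show ?case using assms(2) .
next
  case (step y z) then show ?case using root_closed[OF assms(1)] by simp
qed

lemma comp_min_root:
  assumes "\<forall>v\<in>W. connected F r v \<longrightarrow> v = r \<or> L r v"
  shows "rootS W F L r"
  unfolding rootS_def
proof
  assume "\<exists>w\<in>W. F w r \<and> L w r"
  then obtain w where "w \<in> W" "F w r" "L w r" by blast
  moreover have "connected F r w" using conn_edge[of F r r w] Fs \<open>F w r\<close> by simp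
  ultimately show False using assms asym by fastforce
qed

lemma nonroot:
  assumes "\<forall>v\<in>W. connected F r v \<longrightarrow> v = r \<or> L r v" "r \<in> W"
    "connected F r b" "b \<noteq> r" "b \<in> W"
  shows "\<not> rootS W F L b"
proof
  assume rb: "rootS W F L b"
  have "L r b" using assms by blast
  from root_closed_conn[OF rb this assms(3)] show False by simp
qed

lemma mono_step:
  assumes "L b a" "L w a" "F w a" "\<not> rootS W F L b"
  shows "\<exists>u. F u b \<and> L u b \<and> (u = w \<or> L u w)"
proof (cases "L w b")
  case True
  have "\<not> L a b" using assms(1) asym by blast
  from ustar[OF True assms(3) this] show ?thesis .
next
  case False
  have bW: "b \<in> W" "w \<in> W" using LW assms by auto
  from assms(4) obtain u where u: "u \<in> W" "F u b" "L u b" unfolding rootS_def using Fs by blast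
  have "w = b \<or> L b w" using False tot bW by blast
  then show ?thesis using u tr by blast
qed

context
  fixes r
  assumes rW: "r \<in> W" and rmin: "\<forall>v\<in>W. connected F r v \<longrightarrow> v = r \<or> L r v"
begin

abbreviation "lev v \<equiv> dist F r v"

lemma connW: assumes "connected F r v" shows "v \<in> W"
  using assms unfolding connected_def
proof (induction rule: rtrancl_induct)
  case base show ?case using rW .
next
  case (step y z) then show ?case using FW by auto
qed

lemma mono_aux:
  "\<forall>a b. connected F r a \<longrightarrow> connected F r b \<longrightarrow> lev a = n \<longrightarrow> n < lev b \<longrightarrow> L a b"
proof (induction n)
  case 0
  show ?case
  proof (intro allI impI)
    fix a b assume h: "connected F r a" "connected F r b" "lev a = 0" "0 < lev b"
    have "a = r" using dist_zero[OF h(1) h(3)] by simp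
    moreover have "b \<noteq> r" using h(4) by auto
    ultimately show "L a b" using rmin connW[OF h(2)] h(2) by metis
  qed
next
  case (Suc n)
  show ?case
  proof (intro allI impI)
    fix a b assume h: "connected F r a" "connected F r b" "lev a = Suc n" "Suc n < lev b"
    show "L a b"
    proof (rule ccontr)
      assume nab: "\<not> L a b"
      have "a \<noteq> b" using h by auto
      then have ba: "L b a" using nab tot[OF connW[OF h(1)] connW[OF h(2)]] by blast
      obtain w where w: "F w a" "connected F r w" "lev w = n" using dist_pred[OF h(1) h(3)] by blast
      have wa: "L w a" using Suc.IH w(2) h(1) w(3) h(3) by simp
      have "b \<noteq> r" using h by auto
      then have nr: "\<not> rootS W F L b" using nonroot[OF rmin rW h(2) _ connW[OF h(2)]] by blast
      obtain u where u: "F u b" "L u b" "u = w \<or> L u w" using mono_step[OF ba wa w(1) nr] by blast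
      have cu: "connected F r u" using conn_edge[OF h(2) Fs[OF u(1)]] .
      have "lev b \<le> lev u + 1" using dist_edge[OF cu u(1)] .
      then have "n < lev u" using h by auto
      then have "L w u" using Suc.IH w(2) cu w(3) by simp
      then show False using u(3) tr[of w u w] by auto
    qed
  qed
qed

lemma mono: "connected F r a \<Longrightarrow> connected F r b \<Longrightarrow> lev a < lev b \<Longrightarrow> L a b"
  using mono_aux by blast

lemma same_eq:
  assumes "connected F r a" "connected F r b" "lev a = lev b" "L a b"
  shows "sameS W F L a b"
proof -
  have "a \<noteq> b" using assms(4) by auto
  have "lev b \<noteq> 0" using dist_zero assms \<open>a \<noteq> b\<close> by metis
  then obtain n where n: "lev b = Suc n" by (cases "lev b") auto
  obtain w where w: "F w b" "connected F r w" "lev w = n" using dist_pred[OF assms(2) n] by blast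
  have "L w a" using mono[OF w(2) assms(1)] w n assms(3) by simp
  then show ?thesis unfolding sameS_def using assms(4) w FW by blast
qed

lemma same_far:
  assumes "connected F r a" "connected F r b" "lev a + 2 \<le> lev b"
  shows "\<not> sameS W F L a b"
proof -
  have ab: "L a b" using mono assms by simp
  have "a \<noteq> b" using assms by auto
  moreover have "\<not> L b a" using ab asym by blast
  moreover have "\<not> (\<exists>w\<in>W. F w b \<and> L w a)"
  proof
    assume "\<exists>w\<in>W. F w b \<and> L w a"
    then obtain w where w: "F w b" "L w a" by blast
    have cw: "connected F r w" using conn_edge[OF assms(2) Fs[OF w(1)]] .
    have "lev b \<le> lev w + 1" using dist_edge[OF cw w(1)] .
    then have "L a w" using mono[OF assms(1) cw] assms by simp
    then show False using w asym by blast
  qed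
  ultimately show ?thesis unfolding sameS_def by blast
qed

lemma same_iff:
  assumes "connected F r a" "connected F r b" "lev a \<noteq> lev b + 1" "lev b \<noteq> lev a + 1"
  shows "sameS W F L a b \<longleftrightarrow> lev a = lev b"
proof
  assume s: "sameS W F L a b"
  show "lev a = lev b"
  proof (rule ccontr)
    assume "lev a \<noteq> lev b"
    then have "lev a + 2 \<le> lev b \<or> lev b + 2 \<le> lev a" using assms by linarith
    moreover have "sameS W F L b a" using s unfolding sameS_def by blast
    ultimately show False using same_far assms s by blast
  qed
next
  assume e: "lev a = lev b"
  show "sameS W F L a b"
  proof (cases "a = b")
    case True then show ?thesis unfolding sameS_def by simp
  next
    case False
    then have "L a b \<or> L b a" using tot connW assms by blast
    then show ?thesis
    proof
      assume "L a b" then show ?thesis using same_eq assms e by blast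
    next
      assume "L b a" then have "sameS W F L b a" using same_eq assms e by simp
      then show ?thesis unfolding sameS_def by blast
    qed
  qed
qed

end

lemma comp_min_ex:
  assumes "a \<in> W"
  shows "\<exists>r\<in>W. connected F r a \<and> (\<forall>v\<in>W. connected F r v \<longrightarrow> v = r \<or> L r v)"
proof -
  let ?S = "{v\<in>W. connected F a v}"
  have "a \<in> ?S" using assms by simp
  moreover have "finite ?S" using fin by simp
  moreover have "?S \<subseteq> W" by blast
  ultimately obtain m where m: "m \<in> ?S" "\<forall>s\<in>?S. \<not> L s m"
    using min_ex[OF lo, of ?S] by blast
  have am: "connected F a m" using m(1) by simp
  have ma: "connected F m a" using conn_sym[OF Fs' am] .
  have "\<forall>v\<in>W. connected F m v \<longrightarrow> v = m \<or> L m v"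
  proof (intro ballI impI)
    fix v assume v: "v \<in> W" "connected F m v"
    then have "connected F a v" using conn_trans[OF am] by blast
    then have "v \<in> ?S" using v by simp
    then have "\<not> L v m" using m(2) by blast
    then show "v = m \<or> L m v" using tot[OF v(1)] m(1) by blast
  qed
  moreover have "m \<in> W" using m(1) by simp
  ultimately show ?thesis using ma by blast
qed

lemma conn_iff:
  assumes "a \<in> W" "b \<in> W"
  shows "connS W F L a b \<longleftrightarrow> connected F a b"
proof
  assume c: "connected F a b"
  show "connS W F L a b" unfolding connS_def
  proof
    assume "\<exists>m\<in>W. rootS W F L m \<and> (L a m \<and> (L m b \<or> m = b) \<or> L b m \<and> (L m a \<or> m = a))"
    then obtain m where m: "rootS W F L m" "L a m \<and> (L m b \<or> m = b) \<or> L b m \<and> (L m a \<or> m = a)"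
      by blast
    have c': "connected F b a" using conn_sym[OF Fs' c] .
    from m(2) show False
    proof
      assume h: "L a m \<and> (L m b \<or> m = b)"
      have "L b m" using root_closed_conn[OF m(1) _ c] h by blast
      then show False using h tr[of b m b] by auto
    next
      assume h: "L b m \<and> (L m a \<or> m = a)"
      have "L a m" using root_closed_conn[OF m(1) _ c'] h by blast
      then show False using h tr[of a m a] by auto
    qed
  qed
next
  assume cs: "connS W F L a b"
  show "connected F a b"
  proof (rule ccontr)
    assume nc: "\<not> connected F a b"
    have key: "\<exists>m\<in>W. rootS W F L m \<and> L p m \<and> (L m q \<or> m = q)"
      if pq: "p \<in> W" "q \<in> W" "L p q" "\<not> connected F p q" for p q
    proof -
      obtain r where r: "r \<in> W" "connected F r q" "\<forall>v\<in>W. connected F r v \<longrightarrow> v = r \<or> L r v"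
        using comp_min_ex[OF pq(2)] by blast
      obtain r' where r': "r' \<in> W" "connected F r' p" "\<forall>v\<in>W. connected F r' v \<longrightarrow> v = r' \<or> L r' v"
        using comp_min_ex[OF pq(1)] by blast
      have rr: "rootS W F L r" "rootS W F L r'" using comp_min_root r r' by auto
      have rq: "r = q \<or> L r q" using r(3) pq(2) r(2) by blast
      have "L p r"
      proof (rule ccontr)
        assume "\<not> L p r"
        moreover have "r \<noteq> p"
        proof
          assume "r = p" then show False using r(2) pq(4) by simp
        qed
        ultimately have rp: "L r p" using tot[OF r(1) pq(1)] by blast
        have r'p: "r' = p \<or> L r' p" using r'(3) pq(1) r'(2) by blast
        consider "L r r'" | "r = r'" | "L r' r" using tot[OF r(1) r'(1)] by blast
        then show False
        proof cases
          case 1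
          have "L q r'" using root_closed_conn[OF rr(2) 1 r(2)] .
          show False using r'p
          proof
            assume "r' = p" then show False using \<open>L q r'\<close> pq(3) asym by blast
          next
            assume "L r' p" then have "L q p" using tr \<open>L q r'\<close> by blast
            then show False using pq(3) asym by blast
          qed
        next
          case 2
          have "connected F p r'" using conn_sym[OF Fs' r'(2)] .
          then have "connected F p r" using 2 by simp
          then have "connected F p q" using conn_trans[OF _ r(2)] by blast
          then show False using pq(4) by blast
        next
          case 3
          have "L p r" using root_closed_conn[OF rr(1) 3 r'(2)] .
          then show False using rp asym by blast
        qed
      qed
      then show ?thesis using rr(1) rq r(1) by blast
    qed
    have "a \<noteq> b" using nc by auto
    then have "L a b \<or> L b a" using tot[OF assms] by blast
    then show False
    proof
      assume "L a b"
      then obtain m where "m \<in> W" "rootS W F L m" "L a m" "L m b \<or> m = b" using key[OF assms _ nc] by blast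
      then show False using cs unfolding connS_def by blast
    next
      assume "L b a"
      moreover have "\<not> connected F b a" using nc conn_sym[OF Fs'] by blast
      ultimately obtain m where "m \<in> W" "rootS W F L m" "L b m" "L m a \<or> m = a" using key[OF assms(2,1)] by blast
      then show False using cs unfolding connS_def by blast
    qed
  qed
qed

end



definition partS where
  "partS W F L xa xb ya za \<longleftrightarrow> L xa xb \<and> connS W F L xb ya \<and> connS W F L xb za \<and> sameS W F L ya za"

definition semS where
  "semS W F L c \<longleftrightarrow> partS W F L (c 0) (c 3) (c 4) (c 5) \<or> partS W F L (c 3) (c 0) (c 1) (c 2)"

lemma graph_tau: "graph V E \<Longrightarrow> x \<in> V \<Longrightarrow> graph (tauV V) (tauE E x)"
  unfolding graph_def tauV_def tauE_def by auto

lemma lift_pow: "(u,v) \<in> walk_rel E ^^ n \<Longrightarrow> ((u,b),(v,b)) \<in> walk_rel (tauE E x) ^^ n"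
proof (induction n arbitrary: v)
  case 0 then show ?case by simp
next
  case (Suc n)
  then obtain w where w: "(u,w) \<in> walk_rel E ^^ n" "E w v" by auto
  have "tauE E x (w,b) (v,b)" using w(2) unfolding tauE_def by simp
  then show ?case using Suc.IH[OF w(1)] by (auto intro: relpow_Suc_I)
qed

lemma lift_conn: "connected E u v \<Longrightarrow> connected (tauE E x) (u,b) (v,b)"
  using lift_pow dist_attained conn_of_pow by metis

lemma lift_dist: "connected E u v \<Longrightarrow> dist (tauE E x) (u,b) (v,b) \<le> dist E u v"
  using lift_pow dist_attained dist_le by metis

lemma proj_edge: "tauE E x p q \<Longrightarrow> connected E x (fst p) \<Longrightarrow> connected E x (fst q)"
  unfolding tauE_def using conn_edge by fastforce

lemma proj_conn: "connected (tauE E x) p q \<Longrightarrow> connected E x (fst p) \<Longrightarrow> connected E x (fst q)"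
  unfolding connected_def[of "tauE E x"]
proof (induction rule: rtrancl_induct)
  case base then show ?case .
next
  case (step a b) then show ?case using proj_edge by fastforce
qed

lemma cross: "tauE E x (x,b) (x, \<not> b)"
  unfolding tauE_def by simp

lemma cross_conn: "connected (tauE E x) (x,b) (x,b')"
proof (cases "b' = b")
  case True then show ?thesis by simp
next
  case False
  then have "b' = (\<not> b)" by auto
  then show ?thesis using conn_edge[OF conn_refl[of "tauE E x" "(x,b)"] cross[of E x b]] by simp
qed

lemma char:
  assumes G: "G3' V E x y z" and B: "bft (tauV V) (tauE E x) L"
  shows "semS (tauV V) (tauE E x) L (tauC x y z) \<longleftrightarrow> same_comp3 E x y z \<and> dist E x y = dist E x z"
proof -
  let ?W = "tauV V" and ?H = "tauE E x"
  have gV: "graph V E" and xV: "x \<in> V" and yV: "y \<in> V" and zV: "z \<in> V"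
    using G unfolding G3'_def by auto
  have Es: "\<forall>a b. E a b \<longrightarrow> E b a" using gV unfolding graph_def by blast
  interpret H: bfs ?W ?H L using graph_tau[OF gV xV] B by unfold_locales
  define part where "part b \<longleftrightarrow> partS ?W ?H L (x, \<not> b) (x, b) (y, b) (z, b)" for b
  have sem: "semS ?W ?H L (tauC x y z) \<longleftrightarrow> part True \<or> part False"
    unfolding semS_def part_def tauC_def by auto
  have inW: "(v, b) \<in> ?W" if "v \<in> V" for v b using that unfolding tauV_def by simp
  have cS: "connS ?W ?H L (x,b) (v,b) \<longleftrightarrow> connected ?H (x,b) (v,b)" if "v \<in> V" for v b
    using H.conn_iff[OF inW[OF xV] inW[OF that]] .
  show ?thesis
  proof (cases "same_comp3 E x y z")
    case False
    have "\<not> part b" for b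
    proof
      assume "part b"
      then have "connected ?H (x,b) (y,b)" "connected ?H (x,b) (z,b)"
        unfolding part_def partS_def using cS yV zV by auto
      then have "connected E x y" "connected E x z" using proj_conn[of E x "(x,b)"] by auto
      then show False using False unfolding same_comp3_def by blast
    qed
    then show ?thesis using sem False by blast
  next
    case True
    then have cxy: "connected E x y" and cxz: "connected E x z" unfolding same_comp3_def by auto
    obtain r where rW: "r \<in> ?W" and rx: "connected ?H r (x,False)"
      and rmin: "\<forall>v\<in>?W. connected ?H r v \<longrightarrow> v = r \<or> L r v"
      using H.comp_min_ex[OF inW[OF xV]] by blast
    obtain r0 c where r: "r = (r0, c)" by (cases r)
    have cr: "connected ?H r (v,b)" if "connected E x v" for v b
      using conn_trans[OF conn_trans[OF rx cross_conn] lift_conn[OF that]] .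
    have xr0: "connected E x r0"
      using proj_conn[OF conn_sym[OF H.Fs' rx]] r by simp
    define D where "D = dist ?H r (x,c)"
    define f where "f p = (if snd p = (\<not> c) then int D + 1 + int (dist E x (fst p))
                          else int D - int (dist E x (fst p)))" for p
    have fr: "f r \<le> 0"
    proof -
      have "D \<le> dist E r0 x" unfolding D_def r using lift_dist[OF conn_sym[OF Es xr0]] .
      also have "\<dots> = dist E x r0" using dist_sym[OF Es xr0] .
      finally show ?thesis unfolding f_def r by simp
    qed
    have flip: "\<forall>p q. connected E x (fst p) \<longrightarrow> ?H p q \<longrightarrow> connected E x (fst q) \<and> f q \<le> f p + 1"
    proof (intro allI impI conjI)
      fix p q assume cp: "connected E x (fst p)" and e: "?H p q"
      show cq: "connected E x (fst q)" using proj_edge[OF e cp] .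
      show "f q \<le> f p + 1"
      proof (cases "snd p = snd q \<and> E (fst p) (fst q)")
        case True
        have "dist E x (fst q) \<le> dist E x (fst p) + 1" using dist_edge[OF cp] True by blast
        moreover have "dist E x (fst p) \<le> dist E x (fst q) + 1" using dist_edge[OF cq] True Es by blast
        ultimately show ?thesis unfolding f_def using True by auto
      next
        case False
        then have "fst p = x \<and> fst q = x \<and> snd p \<noteq> snd q" using e unfolding tauE_def by blast
        then show ?thesis unfolding f_def by auto
      qed
    qed
    have lower: "int D + 1 + int (dist E x v) \<le> int (dist ?H r (v, \<not> c))" if "connected E x v" for v
      using lip_dist[of "\<lambda>p. connected E x (fst p)" r f ?H "(v, \<not> c)", OF _ fr flip cr[OF that]]
        xr0 r unfolding f_def by simp
    have crx: "connected ?H r (x,c)" using cr[OF conn_refl] .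
    have "dist ?H r (x, \<not> c) \<le> D + 1" unfolding D_def using dist_edge[OF crx cross] .
    have lev: "dist ?H r (v, \<not> c) = D + 1 + dist E x v" if "connected E x v" for v
    proof -
      have "dist ?H r (v, \<not> c) \<le> dist ?H r (x, \<not> c) + dist ?H (x, \<not> c) (v, \<not> c)"
        using dist_trans[OF cr[OF conn_refl] lift_conn[OF that]] .
      also have "\<dots> \<le> D + 1 + dist E x v"
        using lift_dist[OF that, where x=x and b="\<not> c"] \<open>dist ?H r (x, \<not> c) \<le> D + 1\<close> by simp
      finally show ?thesis using lower[OF that] by linarith
    qed
    have Lx: "L (x,c) (x, \<not> c)"
      using H.mono[OF rW rmin crx cr[OF conn_refl]] lev[OF conn_refl] unfolding D_def by simp
    have npc: "\<not> part c" unfolding part_def partS_def using Lx H.asym by auto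
    have "part (\<not> c) \<longleftrightarrow> sameS ?W ?H L (y, \<not> c) (z, \<not> c)"
      unfolding part_def partS_def using Lx cS[OF yV] cS[OF zV] lift_conn[OF cxy] lift_conn[OF cxz]
      by simp
    also have "\<dots> \<longleftrightarrow> dist ?H r (y, \<not> c) = dist ?H r (z, \<not> c)"
    proof (rule H.same_iff[OF rW rmin cr[OF cxy] cr[OF cxz]])
      have "\<bar>int (dist E x y) - int (dist E x z)\<bar> \<noteq> 1" using G True unfolding G3'_def by blast
      then show "dist ?H r (y, \<not> c) \<noteq> dist ?H r (z, \<not> c) + 1"
        "dist ?H r (z, \<not> c) \<noteq> dist ?H r (y, \<not> c) + 1"
        using lev[OF cxy] lev[OF cxz] by auto
    qed
    also have "\<dots> \<longleftrightarrow> dist E x y = dist E x z" using lev[OF cxy] lev[OF cxz] by simp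
    finally have "part (\<not> c) \<longleftrightarrow> dist E x y = dist E x z" .
    then have "semS ?W ?H L (tauC x y z) \<longleftrightarrow> dist E x y = dist E x z"
      using sem npc by (cases c) auto
    then show ?thesis using True by simp
  qed
qed



definition "leqF s t = Disj (Less s t) (Eq s t)"
definition "rootF t = Neg (Ex 1 (Conj (Edge (Var 1) t) (Less (Var 1) t)))"
definition "connF a b = Neg (Ex 0 (Conj (rootF (Var 0))
   (Disj (Conj (Less a (Var 0)) (leqF (Var 0) b)) (Conj (Less b (Var 0)) (leqF (Var 0) a)))))"
definition "sameF a b = Disj (Eq a b) (Disj (Conj (Less a b) (Ex 0 (Conj (Edge (Var 0) b) (Less (Var 0) a))))
   (Conj (Less b a) (Ex 0 (Conj (Edge (Var 0) a) (Less (Var 0) b)))))"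
definition "partF xa xb ya za = Conj (Less xa xb) (Conj (connF xb ya) (Conj (connF xb za) (sameF ya za)))"
definition "psi = Disj (partF (Cst 0) (Cst 3) (Cst 4) (Cst 5)) (partF (Cst 3) (Cst 0) (Cst 1) (Cst 2))"

lemma sat_psi: "sat W F L c \<rho> psi \<longleftrightarrow> semS W F L c"
  by (simp add: psi_def partF_def connF_def rootF_def sameF_def leqF_def semS_def partS_def
      connS_def rootS_def sameS_def)

lemma sentence_psi: "sentence6 psi"
  by (auto simp add: sentence6_def psi_def partF_def connF_def rootF_def sameF_def leqF_def)

definition bftS where
  "bftS W F S L \<longleftrightarrow> strict_linorder_on S L \<and>
     (\<forall>v\<in>S. \<forall>u\<in>W.
        (L u v \<and> (\<exists>w\<in>W. F u w \<and> \<not> L w v)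
          \<and> (\<forall>u'\<in>W. L u' u \<longrightarrow> \<not> (\<exists>w\<in>W. F u' w \<and> \<not> L w v)))
        \<longrightarrow> F u v)"

lemma bftS_ext:
  assumes g: "graph W F" and S: "S \<subseteq> W" "S \<noteq> W" and b: "bftS W F S L"
  shows "\<exists>v\<in>W-S. \<exists>L'. bftS W F (insert v S) L'"
proof -
  have lo: "strict_linorder_on S L" using b unfolding bftS_def by simp
  have LS: "L a b \<Longrightarrow> a \<in> S \<and> b \<in> S" for a b using lo unfolding strict_linorder_on_def by blast
  have finS: "finite S" using g S finite_subset unfolding graph_def by blast
  have FW: "F a b \<Longrightarrow> a \<in> W \<and> b \<in> W" for a b using g unfolding graph_def by blast
  let ?T = "{u\<in>S. \<exists>w\<in>W-S. F u w}"
  obtain v where v: "v \<in> W - S" and vmin: "?T \<noteq> {} \<Longrightarrow> (\<exists>u0\<in>?T. (\<forall>s\<in>?T. \<not> L s u0) \<and> F u0 v)"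
  proof (cases "?T = {}")
    case True
    then show ?thesis using that S by blast
  next
    case False
    have "finite ?T" using finS by simp
    then obtain u0 where u0: "u0 \<in> ?T" "\<forall>s\<in>?T. \<not> L s u0"
      using min_ex[OF lo, of ?T] False by blast
    then obtain w where "w \<in> W - S" "F u0 w" by blast
    then show ?thesis using that u0 by blast
  qed
  define L' where "L' a b \<longleftrightarrow> L a b \<or> (a \<in> S \<and> b = v)" for a b
  have vS: "v \<notin> S" using v by blast
  have lo': "strict_linorder_on (insert v S) L'"
    using lo vS LS unfolding strict_linorder_on_def L'_def by blast
  have cond: "F u v'"
    if v': "v' \<in> insert v S" and uW: "u \<in> W" and h1: "L' u v'" and h2: "\<exists>w\<in>W. F u w \<and> \<not> L' w v'"
      and h3: "\<forall>u'\<in>W. L' u' u \<longrightarrow> \<not> (\<exists>w\<in>W. F u' w \<and> \<not> L' w v')" for v' u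
  proof (cases "v' = v")
    case False
    then have v'S: "v' \<in> S" using v' by simp
    have e1: "L' a v' \<longleftrightarrow> L a v'" for a unfolding L'_def using False by simp
    have uS: "u \<in> S" using h1 e1 LS by blast
    have e2: "L' a u \<longleftrightarrow> L a u" for a unfolding L'_def using uS vS by auto
    show ?thesis using b v'S uW h1 h2 h3 unfolding bftS_def e1 e2 by blast
  next
    case True
    have uS: "u \<in> S" using h1 True vS LS unfolding L'_def by blast
    have e1: "L' a v \<longleftrightarrow> a \<in> S" for a unfolding L'_def using LS vS by blast
    have e2: "L' a u \<longleftrightarrow> L a u" for a unfolding L'_def using uS vS by auto
    have uT: "u \<in> ?T" using h2 uS unfolding True e1 by blast
    have umin: "\<forall>s\<in>?T. \<not> L s u"
      using h3 S(1) unfolding True e1 e2 by blast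
    obtain u0 where u0: "u0 \<in> ?T" "\<forall>s\<in>?T. \<not> L s u0" "F u0 v" using vmin uT by blast
    have "u = u0" using lo u0 uT umin unfolding strict_linorder_on_def by blast
    then show ?thesis using u0 True by simp
  qed
  have "bftS W F (insert v S) L'" unfolding bftS_def using lo' cond by blast
  then show ?thesis using v by blast
qed

lemma bft_ex_aux:
  assumes g: "graph W F"
  shows "S \<subseteq> W \<Longrightarrow> bftS W F S L \<Longrightarrow> \<exists>L. bftS W F W L"
proof (induction "card (W - S)" arbitrary: S L rule: less_induct)
  case less
  show ?case
  proof (cases "S = W")
    case True then show ?thesis using less by blast
  next
    case False
    obtain v L' where v: "v \<in> W - S" and b': "bftS W F (insert v S) L'"
      using bftS_ext[OF g less.prems(1) False less.prems(2)] by blast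
    have fin: "finite W" using g unfolding graph_def by blast
    have "card (W - insert v S) < card (W - S)"
      using v fin by (metis Diff_insert card_Diff1_less finite_Diff)
    moreover have "insert v S \<subseteq> W" using v less.prems by blast
    ultimately show ?thesis using less.hyps b' by blast
  qed
qed

lemma bft_ex: "graph W F \<Longrightarrow> \<exists>L. bft W F L"
proof -
  assume g: "graph W F"
  have "bftS W F {} (\<lambda>_ _. False)" unfolding bftS_def strict_linorder_on_def by simp
  then obtain L where "bftS W F W L" using bft_ex_aux[OF g] by blast
  then show ?thesis unfolding bftS_def bft_def by blast
qed

lemma eval_iso:
  assumes "\<forall>k\<in>cs_term t. c k \<in> W \<and> c' k = f (c k)" "\<forall>n. \<rho> n \<in> W"
  shows "eval_term c' (f \<circ> \<rho>) t = f (eval_term c \<rho> t) \<and> eval_term c \<rho> t \<in> W"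
  using assms by (cases t) auto

lemma sat_iso:
  assumes bij: "bij_betw f W W'"
    and Fp: "\<forall>u\<in>W. \<forall>v\<in>W. F u v \<longleftrightarrow> F' (f u) (f v)"
    and Lp: "\<forall>u\<in>W. \<forall>v\<in>W. L u v \<longleftrightarrow> L' (f u) (f v)"
  shows "\<forall>k\<in>consts_of \<phi>. c k \<in> W \<and> c' k = f (c k) \<Longrightarrow> \<forall>n. \<rho> n \<in> W \<Longrightarrow>
     sat W F L c \<rho> \<phi> \<longleftrightarrow> sat W' F' L' c' (f \<circ> \<rho>) \<phi>"
proof (induction \<phi> arbitrary: \<rho>)
  case (Eq s t)
  have inj: "inj_on f W" using bij bij_betw_def by blast
  have es: "eval_term c' (f \<circ> \<rho>) s = f (eval_term c \<rho> s)" "eval_term c \<rho> s \<in> W"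
    using eval_iso[of s c W c' f \<rho>] Eq by auto
  have et: "eval_term c' (f \<circ> \<rho>) t = f (eval_term c \<rho> t)" "eval_term c \<rho> t \<in> W"
    using eval_iso[of t c W c' f \<rho>] Eq by auto
  have "sat W' F' L' c' (f \<circ> \<rho>) (Eq s t) \<longleftrightarrow> f (eval_term c \<rho> s) = f (eval_term c \<rho> t)"
    by (simp only: sat.simps es(1) et(1))
  also have "\<dots> \<longleftrightarrow> eval_term c \<rho> s = eval_term c \<rho> t"
    using inj es(2) et(2) by (simp add: inj_on_eq_iff)
  finally have X: "sat W' F' L' c' (f \<circ> \<rho>) (Eq s t) \<longleftrightarrow> eval_term c \<rho> s = eval_term c \<rho> t" .
  have Y: "sat W F L c \<rho> (Eq s t) \<longleftrightarrow> eval_term c \<rho> s = eval_term c \<rho> t" by (simp only: sat.simps)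
  from X Y show ?case by blast
next
  case (Edge s t)
  have es: "eval_term c' (f \<circ> \<rho>) s = f (eval_term c \<rho> s)" "eval_term c \<rho> s \<in> W"
    using eval_iso[of s c W c' f \<rho>] Edge by auto
  have et: "eval_term c' (f \<circ> \<rho>) t = f (eval_term c \<rho> t)" "eval_term c \<rho> t \<in> W"
    using eval_iso[of t c W c' f \<rho>] Edge by auto
  have X: "sat W' F' L' c' (f \<circ> \<rho>) (Edge s t) \<longleftrightarrow> F' (f (eval_term c \<rho> s)) (f (eval_term c \<rho> t))"
    by (simp only: sat.simps es(1) et(1))
  have Y: "sat W F L c \<rho> (Edge s t) \<longleftrightarrow> F (eval_term c \<rho> s) (eval_term c \<rho> t)" by (simp only: sat.simps)
  have Z: "F (eval_term c \<rho> s) (eval_term c \<rho> t) \<longleftrightarrow> F' (f (eval_term c \<rho> s)) (f (eval_term c \<rho> t))"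
    using Fp es(2) et(2) by blast
  from X Y Z show ?case by blast
next
  case (Less s t)
  have es: "eval_term c' (f \<circ> \<rho>) s = f (eval_term c \<rho> s)" "eval_term c \<rho> s \<in> W"
    using eval_iso[of s c W c' f \<rho>] Less by auto
  have et: "eval_term c' (f \<circ> \<rho>) t = f (eval_term c \<rho> t)" "eval_term c \<rho> t \<in> W"
    using eval_iso[of t c W c' f \<rho>] Less by auto
  have X: "sat W' F' L' c' (f \<circ> \<rho>) (Less s t) \<longleftrightarrow> L' (f (eval_term c \<rho> s)) (f (eval_term c \<rho> t))"
    by (simp only: sat.simps es(1) et(1))
  have Y: "sat W F L c \<rho> (Less s t) \<longleftrightarrow> L (eval_term c \<rho> s) (eval_term c \<rho> t)" by (simp only: sat.simps)
  have Z: "L (eval_term c \<rho> s) (eval_term c \<rho> t) \<longleftrightarrow> L' (f (eval_term c \<rho> s)) (f (eval_term c \<rho> t))"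
    using Lp es(2) et(2) by blast
  from X Y Z show ?case by blast
next
  case (Neg p) then show ?case by simp
next
  case (Conj p q) then show ?case by simp
next
  case (Disj p q) then show ?case by simp
next
  case (Ex n p)
  have W': "W' = f ` W" using bij_betw_imp_surj_on[OF bij] by simp
  have eq: "f \<circ> \<rho>(n := v) = (f \<circ> \<rho>)(n := f v)" for v by (rule ext) simp
  have IH: "sat W F L c (\<rho>(n := v)) p \<longleftrightarrow> sat W' F' L' c' (f \<circ> \<rho>(n := v)) p" if "v \<in> W" for v
  proof (rule Ex.IH)
    show "\<forall>k\<in>consts_of p. c k \<in> W \<and> c' k = f (c k)" using Ex.prems(1) by simp
    show "\<forall>m. (\<rho>(n := v)) m \<in> W" using Ex.prems(2) that by simp
  qed
  have "sat W F L c \<rho> (Ex n p) \<longleftrightarrow> (\<exists>v\<in>W. sat W' F' L' c' (f \<circ> \<rho>(n := v)) p)"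
    using IH by (simp only: sat.simps) blast
  also have "\<dots> \<longleftrightarrow> sat W' F' L' c' (f \<circ> \<rho>) (Ex n p)" unfolding eq W' by simp
  finally show ?case .
next
  case (All n p)
  have W': "W' = f ` W" using bij_betw_imp_surj_on[OF bij] by simp
  have eq: "f \<circ> \<rho>(n := v) = (f \<circ> \<rho>)(n := f v)" for v by (rule ext) simp
  have IH: "sat W F L c (\<rho>(n := v)) p \<longleftrightarrow> sat W' F' L' c' (f \<circ> \<rho>(n := v)) p" if "v \<in> W" for v
  proof (rule All.IH)
    show "\<forall>k\<in>consts_of p. c k \<in> W \<and> c' k = f (c k)" using All.prems(1) by simp
    show "\<forall>m. (\<rho>(n := v)) m \<in> W" using All.prems(2) that by simp
  qed
  have "sat W F L c \<rho> (All n p) \<longleftrightarrow> (\<forall>v\<in>W. sat W' F' L' c' (f \<circ> \<rho>(n := v)) p)"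
    using IH by (simp only: sat.simps) blast
  also have "\<dots> \<longleftrightarrow> sat W' F' L' c' (f \<circ> \<rho>) (All n p)" unfolding eq W' by simp
  finally show ?case .
qed

lemma bft_iso:
  assumes b: "bft W F L" and bij: "bij_betw f W W'"
    and Fp: "\<forall>u\<in>W. \<forall>v\<in>W. F u v \<longleftrightarrow> F' (f u) (f v)"
    and g': "\<forall>u v. F' u v \<longrightarrow> u \<in> W' \<and> v \<in> W'"
  defines "L' \<equiv> \<lambda>u v. u \<in> W' \<and> v \<in> W' \<and> L (inv_into W f u) (inv_into W f v)"
  shows "bft W' F' L' \<and> (\<forall>u\<in>W. \<forall>v\<in>W. L u v \<longleftrightarrow> L' (f u) (f v))"
proof -
  have W': "W' = f ` W" using bij_betw_imp_surj_on[OF bij] by simp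
  have inv: "inv_into W f (f u) = u" if "u \<in> W" for u
    using bij that bij_betw_inv_into_left by metis
  have Lp: "L' (f u) (f v) \<longleftrightarrow> L u v" if "u \<in> W" "v \<in> W" for u v
    unfolding L'_def W' using that inv by auto
  have Fp': "F' (f u) (f v) \<longleftrightarrow> F u v" if "u \<in> W" "v \<in> W" for u v using Fp that by blast
  have LW': "L' u v \<Longrightarrow> u \<in> W' \<and> v \<in> W'" for u v unfolding L'_def by blast
  have lo: "strict_linorder_on W L" using b unfolding bft_def by blast
  have lo': "strict_linorder_on W' L'"
    unfolding strict_linorder_on_def
  proof (intro conjI allI impI ballI)
    fix u v assume "L' u v" then show "u \<in> W'" "v \<in> W'" using LW' by auto
  next
    fix u show "\<not> L' u u"
    proof
      assume h: "L' u u"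
      then have "u \<in> f ` W" using LW' W' by simp
      then obtain a where a: "a \<in> W" "u = f a" by blast
      have "L a a" using h a Lp by simp
      then show False using lo unfolding strict_linorder_on_def by blast
    qed
  next
    fix u v w assume h: "L' u v" "L' v w"
    have "u \<in> f ` W" "v \<in> f ` W" "w \<in> f ` W" using LW' h W' by auto
    then obtain a b' d where a: "a \<in> W" "u = f a" "b' \<in> W" "v = f b'" "d \<in> W" "w = f d"
      by blast
    have "L a b'" "L b' d" using h a Lp by auto
    then have "L a d" using lo unfolding strict_linorder_on_def by blast
    then show "L' u w" using a Lp by simp
  next
    fix u v assume "u \<in> W'" "v \<in> W'"
    then have "u \<in> f ` W" "v \<in> f ` W" using W' by auto
    then obtain a b' where a: "a \<in> W" "u = f a" "b' \<in> W" "v = f b'" by blast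
    have "a = b' \<or> L a b' \<or> L b' a" using lo a unfolding strict_linorder_on_def by blast
    then show "u = v \<or> L' u v \<or> L' v u" using a Lp by auto
  qed
  have cond: "\<forall>v\<in>W'. \<forall>u\<in>W'.
        (L' u v \<and> (\<exists>w\<in>W'. F' u w \<and> \<not> L' w v)
          \<and> (\<forall>u'\<in>W'. L' u' u \<longrightarrow> \<not> (\<exists>w\<in>W'. F' u' w \<and> \<not> L' w v)))
        \<longrightarrow> F' u v"
    using b unfolding bft_def W' by (simp add: Lp Fp' cong: ball_cong bex_cong)
  show ?thesis using lo' cond Lp unfolding bft_def by blast
qed



theorem theorem1:
  shows "\<exists>\<psi>. sentence6 \<psi> \<and> B_invariant \<psi> \<and>
    (\<forall>V E x y z. G3' V E x y z \<longrightarrow>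
       ((same_comp3 E x y z \<and> dist E x y = dist E x z) \<longrightarrow> tau_models_B V E x y z \<psi>) \<and>
       ((\<not> same_comp3 E x y z \<or> \<bar>int (dist E x y) - int (dist E x z)\<bar> \<ge> 2)
          \<longrightarrow> \<not> tau_models_B V E x y z \<psi>))"
proof (intro exI[of _ psi] conjI)
  show "sentence6 psi" by (rule sentence_psi)
  have mod: "models W F L c psi \<longleftrightarrow> semS W F L c" for W :: "'w set" and F L c
    unfolding models_def by (rule sat_psi)
  have charm: "models (tauV V) (tauE E x) L (tauC x y z) psi \<longleftrightarrow>
      same_comp3 E x y z \<and> dist E x y = dist E x z"
    if "G3' V E x y z" "bft (tauV V) (tauE E x) L" for V E x y z L
    using char[OF that] mod by blast
  show "B_invariant psi"
    unfolding B_invariant_def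
  proof (intro allI impI)
    fix V E x y z V' E' x' y' z' L L'
    assume G: "G3' V E x y z" and G': "G3' V' E' x' y' z'"
      and B: "bft (tauV V) (tauE E x) L" and B': "bft (tauV V') (tauE E' x') L'"
      and iso: "iso6 (tauV V) (tauE E x) (tauC x y z) (tauV V') (tauE E' x') (tauC x' y' z')"
    let ?W = "tauV V" and ?F = "tauE E x" and ?c = "tauC x y z"
    let ?W' = "tauV V'" and ?F' = "tauE E' x'" and ?c' = "tauC x' y' z'"
    obtain f where bij: "bij_betw f ?W ?W'" and Fp: "\<forall>u\<in>?W. \<forall>v\<in>?W. ?F u v \<longleftrightarrow> ?F' (f u) (f v)"
      and cp: "\<forall>k<6. f (?c k) = ?c' k"
      using iso unfolding iso6_def by blast
    have gV': "graph V' E'" "x' \<in> V'" using G' unfolding G3'_def by auto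
    have g': "\<forall>u v. ?F' u v \<longrightarrow> u \<in> ?W' \<and> v \<in> ?W'"
      using graph_tau[OF gV'] unfolding graph_def by blast
    define L'' where "L'' = (\<lambda>u v. u \<in> ?W' \<and> v \<in> ?W' \<and> L (inv_into ?W f u) (inv_into ?W f v))"
    have bi: "bft ?W' ?F' L'' \<and> (\<forall>u\<in>?W. \<forall>v\<in>?W. L u v \<longleftrightarrow> L'' (f u) (f v))"
      using bft_iso[OF B bij Fp g'] unfolding L''_def by blast
    have xyzV: "x \<in> V" "y \<in> V" "z \<in> V" using G unfolding G3'_def by auto
    have cW: "?c k \<in> ?W" for k using xyzV unfolding tauC_def tauV_def by auto
    define \<rho> where "\<rho> = (\<lambda>_::nat. SOME v. v \<in> ?W)"
    have \<rho>W: "\<forall>n. \<rho> n \<in> ?W" unfolding \<rho>_def using cW[of 0] by (metis someI)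
    have cs: "\<forall>k\<in>consts_of psi. ?c k \<in> ?W \<and> ?c' k = f (?c k)"
      using sentence_psi cp cW unfolding sentence6_def by auto
    have "models ?W ?F L ?c psi \<longleftrightarrow> sat ?W ?F L ?c \<rho> psi"
      using mod sat_psi by metis
    also have "\<dots> \<longleftrightarrow> sat ?W' ?F' L'' ?c' (f \<circ> \<rho>) psi"
      using sat_iso[OF bij Fp _ cs \<rho>W] bi by blast
    also have "\<dots> \<longleftrightarrow> semS ?W' ?F' L'' ?c'" by (rule sat_psi)
    also have "\<dots> \<longleftrightarrow> same_comp3 E' x' y' z' \<and> dist E' x' y' = dist E' x' z'"
      using char[OF G'] bi by blast
    also have "\<dots> \<longleftrightarrow> models ?W' ?F' L' ?c' psi" using charm[OF G' B'] by blast
    finally show "models ?W ?F L ?c psi \<longleftrightarrow> models ?W' ?F' L' ?c' psi" .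
  qed
  show "\<forall>V E x y z. G3' V E x y z \<longrightarrow>
       ((same_comp3 E x y z \<and> dist E x y = dist E x z) \<longrightarrow> tau_models_B V E x y z psi) \<and>
       ((\<not> same_comp3 E x y z \<or> \<bar>int (dist E x y) - int (dist E x z)\<bar> \<ge> 2)
          \<longrightarrow> \<not> tau_models_B V E x y z psi)"
  proof (intro allI impI)
    fix V E x y z assume G: "G3' V E x y z"
    have gV: "graph V E" "x \<in> V" using G unfolding G3'_def by auto
    obtain L0 where L0: "bft (tauV V) (tauE E x) L0" using bft_ex[OF graph_tau[OF gV]] by blast
    have "tau_models_B V E x y z psi \<longleftrightarrow> same_comp3 E x y z \<and> dist E x y = dist E x z"
      unfolding tau_models_B_def using charm[OF G] L0 by blast
    then show "((same_comp3 E x y z \<and> dist E x y = dist E x z) \<longrightarrow> tau_models_B V E x y z psi) \<and>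
       ((\<not> same_comp3 E x y z \<or> \<bar>int (dist E x y) - int (dist E x z)\<bar> \<ge> 2)
          \<longrightarrow> \<not> tau_models_B V E x y z psi)" by auto
  qed
qed


end
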